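(* The class of weakly separable extensions is Morita invariant: if $A/B$ is weakly separable and $A/B$ is Morita equivalent to $A'/B'$, then $A'/B'$ is weakly separable.
   Context: All rings have identity, subrings contain the identity, modules are unital; a ring extension $A/B$ means $B$ is a subring of $A$. A $B$-derivation of $A$ to $A$ is an additive map $D:A\to A$ with $D(xy)=D(x)y+xD(y)$ for all $x,y\in A$ and $D(b)=0$ for all $b\in B$; it is inner if there is $s\in A$ with $D(x)=sx-xs$ for all $x\in A$. $A/B$ is weakly separable if every $B$-derivation of $A$ to $A$ is inner. For bimodules ${}_AX_{A'}$, ${}_AY_{A'}$, write $X\mid Y$ if $X$ is isomorphic to a direct summand of a finite direct sum of copies of $Y$, and $X\sim Y$ if $X\mid Y$ and $Y\mid X$. $\mathrm{End}^r({}_AM)$ denotes the ring of left $A$-endomorphisms of $M$ acting on the right. A bimodule ${}_AM_{A'}$ is a Morita module if ${}_AM\sim{}_AA$ and $\mathrm{End}^r({}_AM)=A'$. Ring extensions $A/B$ and $A'/B'$ are Morita equivalent if there exist Morita modules ${}_AM_{A'}$ and ${}_BN_{B'}$ with ${}_AA\otimes_BN_{B'}\cong{}_AM_{B'}$. A class $\mathscr C$ is Morita invariant if whenever $A/B\in\mathscr C$ and $A/B$ is Morita equivalent to $A'/B'$, then $A'/B'\in\mathscr C$. *)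

theory Defs
  imports Main "HOL-Library.Poly_Mapping"
begin

text \<open>A ring is modelled as a type of class ring_1 (the whole type is the ring).
  A ring extension A/B is a type 'a (the ring A) together with a subring B.\<close>

definition is_subring :: "'a::ring_1 set \<Rightarrow> bool" where
  "is_subring B \<longleftrightarrow> 1 \<in> B \<and> (\<forall>x\<in>B. \<forall>y\<in>B. x + y \<in> B \<and> x - y \<in> B \<and> x * y \<in> B)"

definition is_B_derivation :: "'a::ring_1 set \<Rightarrow> ('a \<Rightarrow> 'a) \<Rightarrow> bool" where
  "is_B_derivation B D \<longleftrightarrow>
     (\<forall>x y. D (x + y) = D x + D y) \<and>
     (\<forall>x y. D (x * y) = D x * y + x * D y) \<and>
     (\<forall>b\<in>B. D b = 0)"

definition is_inner_derivation :: "('a::ring_1 \<Rightarrow> 'a) \<Rightarrow> bool" where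
  "is_inner_derivation D \<longleftrightarrow> (\<exists>s. \<forall>x. D x = s * x - x * s)"

definition weakly_separable :: "'a::ring_1 set \<Rightarrow> bool" where
  "weakly_separable B \<longleftrightarrow> (\<forall>D. is_B_derivation B D \<longrightarrow> is_inner_derivation D)"

definition left_module :: "'r::ring_1 set \<Rightarrow> ('r \<Rightarrow> 'm::ab_group_add \<Rightarrow> 'm) \<Rightarrow> bool" where
  "left_module R act \<longleftrightarrow>
     (\<forall>r\<in>R. \<forall>x y. act r (x + y) = act r x + act r y) \<and>
     (\<forall>r\<in>R. \<forall>s\<in>R. \<forall>x. act (r + s) x = act r x + act s x) \<and>
     (\<forall>r\<in>R. \<forall>s\<in>R. \<forall>x. act (r * s) x = act r (act s x)) \<and>
     (\<forall>x. act 1 x = x)"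

definition right_module :: "'r::ring_1 set \<Rightarrow> ('m::ab_group_add \<Rightarrow> 'r \<Rightarrow> 'm) \<Rightarrow> bool" where
  "right_module R act \<longleftrightarrow>
     (\<forall>r\<in>R. \<forall>x y. act (x + y) r = act x r + act y r) \<and>
     (\<forall>r\<in>R. \<forall>s\<in>R. \<forall>x. act x (r + s) = act x r + act x s) \<and>
     (\<forall>r\<in>R. \<forall>s\<in>R. \<forall>x. act x (r * s) = act (act x r) s) \<and>
     (\<forall>x. act x 1 = x)"

definition bimodule ::
  "'r::ring_1 set \<Rightarrow> 's::ring_1 set \<Rightarrow> ('r \<Rightarrow> 'm::ab_group_add \<Rightarrow> 'm) \<Rightarrow> ('m \<Rightarrow> 's \<Rightarrow> 'm) \<Rightarrow> bool" where
  "bimodule R S la ra \<longleftrightarrow> left_module R la \<and> right_module S ra \<and>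
     (\<forall>r\<in>R. \<forall>s\<in>S. \<forall>x. ra (la r x) s = la r (ra x s))"

definition left_linear ::
  "'r::ring_1 set \<Rightarrow> ('r \<Rightarrow> 'x::ab_group_add \<Rightarrow> 'x) \<Rightarrow> ('r \<Rightarrow> 'y::ab_group_add \<Rightarrow> 'y) \<Rightarrow> ('x \<Rightarrow> 'y) \<Rightarrow> bool" where
  "left_linear R actX actY f \<longleftrightarrow>
     (\<forall>x y. f (x + y) = f x + f y) \<and> (\<forall>r\<in>R. \<forall>x. f (actX r x) = actY r (f x))"

text \<open>The finite direct sum Y^n of a module with carrier CY (a subset of the type 'y),
  realised as the functions nat => 'y with values in CY vanishing outside {..<n},
  with componentwise addition and left action.\<close>

definition dsum_carrier :: "'y::zero set \<Rightarrow> nat \<Rightarrow> (nat \<Rightarrow> 'y) set" where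
  "dsum_carrier CY n = {v. (\<forall>i. v i \<in> CY) \<and> (\<forall>i\<ge>n. v i = 0)}"

definition dsum_act :: "('r \<Rightarrow> 'y \<Rightarrow> 'y) \<Rightarrow> 'r \<Rightarrow> (nat \<Rightarrow> 'y) \<Rightarrow> (nat \<Rightarrow> 'y)" where
  "dsum_act act r v = (\<lambda>i. act r (v i))"

text \<open>X | Y for left R-modules X (carrier CX) and Y (carrier CY): X is isomorphic to a
  direct summand of Y^n for some n, i.e. there are R-linear maps f : X -> Y^n and
  g : Y^n -> X with g o f = id_X.\<close>

definition left_mod_dvd ::
  "'r::ring_1 set \<Rightarrow> 'x::ab_group_add set \<Rightarrow> ('r \<Rightarrow> 'x \<Rightarrow> 'x)
   \<Rightarrow> 'y::ab_group_add set \<Rightarrow> ('r \<Rightarrow> 'y \<Rightarrow> 'y) \<Rightarrow> bool" where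
  "left_mod_dvd R CX actX CY actY \<longleftrightarrow>
     (\<exists>n (f :: 'x \<Rightarrow> nat \<Rightarrow> 'y) (g :: (nat \<Rightarrow> 'y) \<Rightarrow> 'x).
        (\<forall>x\<in>CX. f x \<in> dsum_carrier CY n) \<and>
        (\<forall>v\<in>dsum_carrier CY n. g v \<in> CX) \<and>
        (\<forall>x\<in>CX. \<forall>y\<in>CX. f (x + y) = (\<lambda>i. f x i + f y i)) \<and>
        (\<forall>r\<in>R. \<forall>x\<in>CX. f (actX r x) = dsum_act actY r (f x)) \<and>
        (\<forall>v\<in>dsum_carrier CY n. \<forall>w\<in>dsum_carrier CY n. g (\<lambda>i. v i + w i) = g v + g w) \<and>
        (\<forall>r\<in>R. \<forall>v\<in>dsum_carrier CY n. g (dsum_act actY r v) = actX r (g v)) \<and>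
        (\<forall>x\<in>CX. g (f x) = x))"

definition left_mod_sim ::
  "'r::ring_1 set \<Rightarrow> 'x::ab_group_add set \<Rightarrow> ('r \<Rightarrow> 'x \<Rightarrow> 'x)
   \<Rightarrow> 'y::ab_group_add set \<Rightarrow> ('r \<Rightarrow> 'y \<Rightarrow> 'y) \<Rightarrow> bool" where
  "left_mod_sim R CX actX CY actY \<longleftrightarrow>
     left_mod_dvd R CX actX CY actY \<and> left_mod_dvd R CY actY CX actX"

text \<open>End^r({}_R M) = S: the canonical map S -> End^r({}_R M), s |-> (m |-> m.s), is a
  bijection onto the left R-endomorphisms (it is automatically a ring homomorphism
  for the bimodule structure).\<close>

definition endr_eq ::
  "'r::ring_1 set \<Rightarrow> 's::ring_1 set \<Rightarrow> ('r \<Rightarrow> 'm::ab_group_add \<Rightarrow> 'm) \<Rightarrow> ('m \<Rightarrow> 's \<Rightarrow> 'm) \<Rightarrow> bool" where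
  "endr_eq R S la ra \<longleftrightarrow>
     (\<forall>\<phi>. left_linear R la la \<phi> \<longrightarrow> (\<exists>!s. s \<in> S \<and> (\<forall>m. \<phi> m = ra m s)))"

text \<open>Morita module {}_R M_S (M with carrier the whole type; {}_R R is the ring R,
  i.e. the subset R of the ambient ring type, acting on itself by multiplication).\<close>

definition morita_module ::
  "'r::ring_1 set \<Rightarrow> 's::ring_1 set \<Rightarrow> ('r \<Rightarrow> 'm::ab_group_add \<Rightarrow> 'm) \<Rightarrow> ('m \<Rightarrow> 's \<Rightarrow> 'm) \<Rightarrow> bool" where
  "morita_module R S la ra \<longleftrightarrow>
     bimodule R S la ra \<and> left_mod_sim R UNIV la R ((*)) \<and> endr_eq R S la ra"

section \<open>Tensor product A \<otimes>_B N as quotient of the free abelian group\<close>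

definition zsmult :: "int \<Rightarrow> 'm::ab_group_add \<Rightarrow> 'm" where
  "zsmult k x = (if k \<ge> 0 then (\<Sum>_\<in>{..<nat k}. x) else - (\<Sum>_\<in>{..<nat (-k)}. x))"

inductive_set tensor_rel :: "'a::ring_1 set \<Rightarrow> ('a \<Rightarrow> 'n::ab_group_add \<Rightarrow> 'n) \<Rightarrow> ('a \<times> 'n \<Rightarrow>\<^sub>0 int) set"
  for B :: "'a set" and actN :: "'a \<Rightarrow> 'n \<Rightarrow> 'n" where
  rel_zero: "0 \<in> tensor_rel B actN"
| rel_addl: "Poly_Mapping.single (x + y, n) 1 - Poly_Mapping.single (x, n) 1
               - Poly_Mapping.single (y, n) 1 \<in> tensor_rel B actN"
| rel_addr: "Poly_Mapping.single (x, n + n') 1 - Poly_Mapping.single (x, n) 1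
               - Poly_Mapping.single (x, n') 1 \<in> tensor_rel B actN"
| rel_bal: "b \<in> B \<Longrightarrow> Poly_Mapping.single (x * b, n) 1 - Poly_Mapping.single (x, actN b n) 1
               \<in> tensor_rel B actN"
| rel_plus: "f \<in> tensor_rel B actN \<Longrightarrow> g \<in> tensor_rel B actN \<Longrightarrow> f + g \<in> tensor_rel B actN"
| rel_uminus: "f \<in> tensor_rel B actN \<Longrightarrow> - f \<in> tensor_rel B actN"

definition free_ext :: "('a \<Rightarrow> 'n \<Rightarrow> 'm::ab_group_add) \<Rightarrow> ('a \<times> 'n \<Rightarrow>\<^sub>0 int) \<Rightarrow> 'm" where
  "free_ext \<theta> f = (\<Sum>p\<in>Poly_Mapping.keys f. zsmult (Poly_Mapping.lookup f p) (\<theta> (fst p) (snd p)))"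

text \<open>{}_A A \<otimes>_B N_{B'} \<cong> {}_A M_{B'}: there is theta with x \<otimes> n |-> theta x n inducing an
  isomorphism of abelian groups (free group / relations) -> M, which is left A-linear
  and right B'-linear.\<close>

definition tensor_iso ::
  "'a::ring_1 set \<Rightarrow> 'b::ring_1 set \<Rightarrow> ('a \<Rightarrow> 'n::ab_group_add \<Rightarrow> 'n) \<Rightarrow> ('n \<Rightarrow> 'b \<Rightarrow> 'n)
   \<Rightarrow> ('a \<Rightarrow> 'm::ab_group_add \<Rightarrow> 'm) \<Rightarrow> ('m \<Rightarrow> 'b \<Rightarrow> 'm) \<Rightarrow> bool" where
  "tensor_iso B B' laN raN laM raM \<longleftrightarrow>
     (\<exists>\<theta> :: 'a \<Rightarrow> 'n \<Rightarrow> 'm.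
        surj (free_ext \<theta>) \<and>
        {f. free_ext \<theta> f = 0} = tensor_rel B laN \<and>
        (\<forall>a x n. \<theta> (a * x) n = laM a (\<theta> x n)) \<and>
        (\<forall>b'\<in>B'. \<forall>x n. \<theta> x (raN n b') = raM (\<theta> x n) b'))"

text \<open>Morita equivalence of ring extensions A/B (A = UNIV::'a set) and A'/B' (A' = UNIV::'c set),
  witnessed by the Morita modules {}_A M_{A'} (actions laM, raM) and {}_B N_{B'} (laN, raN).\<close>

definition morita_equiv_via ::
  "'a::ring_1 set \<Rightarrow> 'c::ring_1 set
   \<Rightarrow> ('a \<Rightarrow> 'm::ab_group_add \<Rightarrow> 'm) \<Rightarrow> ('m \<Rightarrow> 'c \<Rightarrow> 'm)
   \<Rightarrow> ('a \<Rightarrow> 'n::ab_group_add \<Rightarrow> 'n) \<Rightarrow> ('n \<Rightarrow> 'c \<Rightarrow> 'n) \<Rightarrow> bool" where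
  "morita_equiv_via B B' laM raM laN raN \<longleftrightarrow>
     morita_module (UNIV :: 'a set) (UNIV :: 'c set) laM raM \<and>
     morita_module B B' laN raN \<and>
     tensor_iso B B' laN raN laM raM"

end

theory Submission
  imports Defs
begin

lemma zsmult_0 [simp]: "zsmult 0 x = 0" by (simp add: zsmult_def)
lemma zsmult_1 [simp]: "zsmult 1 x = x" by (simp add: zsmult_def)

lemma zsmult_succ: "zsmult (k + 1) x = zsmult k x + x"
proof (cases "k \<ge> 0")
  case True
  then have "nat (k+1) = Suc (nat k)" by simp
  then show ?thesis using True by (simp add: zsmult_def)
next
  case False
  show ?thesis
  proof (cases "k = -1")
    case True then show ?thesis by (simp add: zsmult_def)
  next
    case F2: False
    then have "nat (-k) = Suc (nat (-(k+1)))" using False by simp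
    then show ?thesis using False F2 by (simp add: zsmult_def)
  qed
qed

lemma zsmult_pred: "zsmult (k - 1) x = zsmult k x - x"
  using zsmult_succ[of "k - 1" x] by (simp add: algebra_simps)

lemma zsmult_add: "zsmult (a + b) x = zsmult a x + zsmult b x"
proof (induction b rule: int_induct[where k=0])
  case base then show ?case by simp
next
  case (step1 i)
  have "zsmult (a + (i+1)) x = zsmult ((a + i) + 1) x" by (simp add: add.assoc)
  also have "\<dots> = zsmult a x + zsmult (i+1) x" using step1 by (simp add: zsmult_succ)
  finally show ?case .
next
  case (step2 i)
  have "zsmult (a + (i-1)) x = zsmult ((a + i) - 1) x" by (simp add: algebra_simps)
  also have "\<dots> = zsmult a x + zsmult (i-1) x" using step2 by (simp add: zsmult_pred)
  finally show ?case .
qed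

lemma free_ext_superset:
  assumes "finite S" "Poly_Mapping.keys f \<subseteq> S"
  shows "free_ext \<theta> f = (\<Sum>p\<in>S. zsmult (Poly_Mapping.lookup f p) (\<theta> (fst p) (snd p)))"
  unfolding free_ext_def
  by (rule sum.mono_neutral_left) (use assms in \<open>auto simp: in_keys_iff\<close>)

lemma free_ext_add: "free_ext \<theta> (f + g) = free_ext \<theta> f + free_ext \<theta> g"
proof -
  let ?S = "Poly_Mapping.keys f \<union> Poly_Mapping.keys g"
  have "free_ext \<theta> (f + g) = (\<Sum>p\<in>?S. zsmult (Poly_Mapping.lookup (f+g) p) (\<theta> (fst p) (snd p)))"
    by (rule free_ext_superset) (auto dest: subsetD[OF keys_add])
  also have "\<dots> = (\<Sum>p\<in>?S. zsmult (Poly_Mapping.lookup f p) (\<theta> (fst p) (snd p)))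
      + (\<Sum>p\<in>?S. zsmult (Poly_Mapping.lookup g p) (\<theta> (fst p) (snd p)))"
    by (simp add: lookup_add zsmult_add sum.distrib)
  also have "\<dots> = free_ext \<theta> f + free_ext \<theta> g"
    by (subst (1 2) free_ext_superset[symmetric]) auto
  finally show ?thesis .
qed

lemma free_ext_zero [simp]: "free_ext \<theta> 0 = 0" by (simp add: free_ext_def)

lemma free_ext_single [simp]: "free_ext \<theta> (Poly_Mapping.single p 1) = \<theta> (fst p) (snd p)"
  by (simp add: free_ext_def)

lemma free_ext_uminus: "free_ext \<theta> (- f) = - free_ext \<theta> f"
  using free_ext_add[of \<theta> f "-f"] by (simp add: eq_neg_iff_add_eq_0 add.commute)

lemma free_ext_diff: "free_ext \<theta> (f - g) = free_ext \<theta> f - free_ext \<theta> g"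
  using free_ext_add[of \<theta> f "-g"] by (simp add: free_ext_uminus)

lemma free_ext_rel:
  assumes al: "\<And>x y n. \<phi> (x + y) n = \<phi> x n + \<phi> y n"
    and ar: "\<And>x n n'. \<phi> x (n + n') = \<phi> x n + \<phi> x n'"
    and bal: "\<And>b x n. b \<in> B \<Longrightarrow> \<phi> (x * b) n = \<phi> x (actN b n)"
    and f: "f \<in> tensor_rel B actN"
  shows "free_ext \<phi> f = 0"
  using f
proof (induction rule: tensor_rel.induct)
  case (rel_bal b x n) then show ?case by (simp add: free_ext_diff bal)
qed (simp_all add: free_ext_diff free_ext_add free_ext_uminus al ar)

lemma additive_zero: "(\<And>x y. h (x + y) = h x + h y) \<Longrightarrow> h (0::'a::ab_group_add) = (0::'b::ab_group_add)"
proof -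
  assume h: "\<And>x y. h (x + y) = h x + h y"
  have "h (0 + 0) = h 0 + h 0" by (rule h)
  then show ?thesis by simp
qed

lemma additive_sum:
  assumes "\<And>x y. h (x + y) = h x + h y"
  shows "h (\<Sum>i\<in>S. (f i :: 'a::ab_group_add)) = (\<Sum>i\<in>S. h (f i) :: 'b::ab_group_add)"
proof (induction S rule: infinite_finite_induct)
  case (infinite A) then show ?case using additive_zero[of h, OF assms] by simp
next
  case empty then show ?case using additive_zero[of h, OF assms] by simp
next
  case (insert x F) then show ?case by (simp add: assms)
qed

lemma additive_uminus:
  assumes "\<And>x y. h (x + y) = h x + h y"
  shows "h (- (x::'a::ab_group_add)) = - (h x :: 'b::ab_group_add)"
  using assms[of x "-x"] additive_zero[of h, OF assms] by (simp add: eq_neg_iff_add_eq_0 add.commute)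

lemma additive_diff:
  assumes "\<And>x y. h (x + y) = h x + h y"
  shows "h ((x::'a::ab_group_add) - y) = h x - (h y :: 'b::ab_group_add)"
  using assms[of x "-y"] additive_uminus[of h, OF assms] by simp

locale MS =
  fixes B :: "'a::ring_1 set" and B' :: "'c::ring_1 set"
    and laM :: "'a \<Rightarrow> 'm::ab_group_add \<Rightarrow> 'm" and raM :: "'m \<Rightarrow> 'c \<Rightarrow> 'm"
    and laN :: "'a \<Rightarrow> 'n::ab_group_add \<Rightarrow> 'n" and raN :: "'n \<Rightarrow> 'c \<Rightarrow> 'n"
    and \<theta> :: "'a \<Rightarrow> 'n \<Rightarrow> 'm"
  assumes subB: "is_subring B" and subB': "is_subring B'"
    and bimM: "bimodule UNIV UNIV laM raM" and endM: "endr_eq UNIV UNIV laM raM"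
    and bimN: "bimodule B B' laN raN" and endN: "endr_eq B B' laN raN"
    and th_surj: "surj (free_ext \<theta>)" and th_ker: "{f. free_ext \<theta> f = 0} = tensor_rel B laN"
    and th_l: "\<And>a x n. \<theta> (a * x) n = laM a (\<theta> x n)"
    and th_r: "\<And>b' x n. b' \<in> B' \<Longrightarrow> \<theta> x (raN n b') = raM (\<theta> x n) b'"
begin

lemma B1: "1 \<in> B" using subB by (simp add: is_subring_def)
lemma Badd: "x \<in> B \<Longrightarrow> y \<in> B \<Longrightarrow> x + y \<in> B" using subB by (simp add: is_subring_def)
lemma Bmult: "x \<in> B \<Longrightarrow> y \<in> B \<Longrightarrow> x * y \<in> B" using subB by (simp add: is_subring_def)
lemma B0: "0 \<in> B" using subB unfolding is_subring_def by (metis diff_self)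
lemma B'1: "1 \<in> B'" using subB' by (simp add: is_subring_def)

lemma laM_add2 [simp]: "laM a (m + m') = laM a m + laM a m'"
  using bimM by (simp add: bimodule_def left_module_def)
lemma laM_add1 [simp]: "laM (a + a') m = laM a m + laM a' m"
  using bimM by (simp add: bimodule_def left_module_def)
lemma laM_mult: "laM (a * a') m = laM a (laM a' m)"
  using bimM by (simp add: bimodule_def left_module_def)
lemma laM_one [simp]: "laM 1 m = m"
  using bimM by (simp add: bimodule_def left_module_def)
lemma raM_add1 [simp]: "raM (m + m') y = raM m y + raM m' y"
  using bimM by (simp add: bimodule_def right_module_def)
lemma raM_add2 [simp]: "raM m (y + y') = raM m y + raM m y'"
  using bimM by (simp add: bimodule_def right_module_def)
lemma raM_mult: "raM m (y * y') = raM (raM m y) y'"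
  using bimM by (simp add: bimodule_def right_module_def)
lemma raM_one [simp]: "raM m 1 = m"
  using bimM by (simp add: bimodule_def right_module_def)
lemma raM_laM: "raM (laM a m) y = laM a (raM m y)"
  using bimM by (simp add: bimodule_def)

lemma laM_zero2 [simp]: "laM a 0 = 0" by (rule additive_zero) simp
lemma laM_zero1 [simp]: "laM 0 m = 0" using additive_zero[of "\<lambda>a. laM a m"] by simp
lemma raM_zero1 [simp]: "raM 0 y = 0" by (rule additive_zero) simp
lemma raM_zero2 [simp]: "raM m 0 = 0" using additive_zero[of "\<lambda>y. raM m y"] by simp
lemma laM_sum2: "laM a (\<Sum>i\<in>S. f i) = (\<Sum>i\<in>S. laM a (f i))" by (rule additive_sum) simp
lemma laM_sum1: "laM (\<Sum>i\<in>S. f i) m = (\<Sum>i\<in>S. laM (f i) m)"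
  using additive_sum[of "\<lambda>a. laM a m"] by simp
lemma raM_sum1: "raM (\<Sum>i\<in>S. f i) y = (\<Sum>i\<in>S. raM (f i) y)" by (rule additive_sum) simp
lemma raM_sum2: "raM m (\<Sum>i\<in>S. f i) = (\<Sum>i\<in>S. raM m (f i))"
  using additive_sum[of "\<lambda>y. raM m y"] by simp
lemma raM_diff2: "raM m (y - z) = raM m y - raM m z"
  using additive_diff[of "\<lambda>y. raM m y"] by simp
lemma laM_diff1: "laM (a - b) m = laM a m - laM b m"
  using additive_diff[of "\<lambda>a. laM a m"] by simp

lemma laN_add2: "b \<in> B \<Longrightarrow> laN b (n + n') = laN b n + laN b n'"
  using bimN by (simp add: bimodule_def left_module_def)
lemma laN_add1: "b \<in> B \<Longrightarrow> b' \<in> B \<Longrightarrow> laN (b + b') n = laN b n + laN b' n"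
  using bimN by (simp add: bimodule_def left_module_def)
lemma laN_mult: "b \<in> B \<Longrightarrow> b' \<in> B \<Longrightarrow> laN (b * b') n = laN b (laN b' n)"
  using bimN by (simp add: bimodule_def left_module_def)
lemma laN_one [simp]: "laN 1 n = n"
  using bimN by (simp add: bimodule_def left_module_def)
lemma laN_zero2: "b \<in> B \<Longrightarrow> laN b 0 = 0"
  using additive_zero[of "laN b"] laN_add2 by blast

lemma th_add1: "\<theta> (x + y) n = \<theta> x n + \<theta> y n"
proof -
  have "Poly_Mapping.single (x + y, n) 1 - Poly_Mapping.single (x, n) 1
               - Poly_Mapping.single (y, n) 1 \<in> tensor_rel B laN" by (rule tensor_rel.rel_addl)
  then have "free_ext \<theta> (Poly_Mapping.single (x + y, n) 1 - Poly_Mapping.single (x, n) 1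
               - Poly_Mapping.single (y, n) 1) = 0" using th_ker by blast
  then have "\<theta> (x + y) n - (\<theta> x n + \<theta> y n) = 0" by (simp add: free_ext_diff free_ext_add diff_diff_eq)
  then show ?thesis by simp
qed

lemma th_add2: "\<theta> x (n + n') = \<theta> x n + \<theta> x n'"
proof -
  have "Poly_Mapping.single (x, n + n') 1 - Poly_Mapping.single (x, n) 1
               - Poly_Mapping.single (x, n') 1 \<in> tensor_rel B laN" by (rule tensor_rel.rel_addr)
  then have "free_ext \<theta> (Poly_Mapping.single (x, n + n') 1 - Poly_Mapping.single (x, n) 1
               - Poly_Mapping.single (x, n') 1) = 0" using th_ker by blast
  then have "\<theta> x (n + n') - (\<theta> x n + \<theta> x n') = 0" by (simp add: free_ext_diff free_ext_add diff_diff_eq)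
  then show ?thesis by simp
qed

lemma th_bal: "b \<in> B \<Longrightarrow> \<theta> (x * b) n = \<theta> x (laN b n)"
proof -
  assume b: "b \<in> B"
  have "Poly_Mapping.single (x * b, n) 1 - Poly_Mapping.single (x, laN b n) 1 \<in> tensor_rel B laN"
    by (rule tensor_rel.rel_bal[OF b])
  then have "free_ext \<theta> (Poly_Mapping.single (x * b, n) 1 - Poly_Mapping.single (x, laN b n) 1) = 0"
    using th_ker by blast
  then show ?thesis by (simp add: free_ext_diff)
qed

lemma th_sum1: "\<theta> (\<Sum>i\<in>S. f i) n = (\<Sum>i\<in>S. \<theta> (f i) n)"
  using additive_sum[of "\<lambda>x. \<theta> x n"] th_add1 by simp
lemma th_sum2: "\<theta> x (\<Sum>i\<in>S. f i) = (\<Sum>i\<in>S. \<theta> x (f i))"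
  using additive_sum[of "\<theta> x"] th_add2 by simp
lemma th_diff1: "\<theta> (x - y) n = \<theta> x n - \<theta> y n"
  using additive_diff[of "\<lambda>x. \<theta> x n"] th_add1 by simp
lemma th_laM: "\<theta> a n = laM a (\<theta> 1 n)"
  using th_l[of a 1 n] by simp

lemma zsmult_th: "zsmult k (\<theta> x n) = \<theta> (of_int k * x) n"
proof (induction k rule: int_induct[where k=0])
  case base then show ?case using additive_zero[of "\<lambda>x. \<theta> x n"] th_add1 by simp
next
  case (step1 i) then show ?case by (simp add: zsmult_succ th_add1 distrib_right)
next
  case (step2 i) then show ?case by (simp add: zsmult_pred th_diff1 left_diff_distrib)
qed

lemma th_induct:
  assumes z: "P 0" and t: "\<And>x n. P (\<theta> x n)" and p: "\<And>u v. P u \<Longrightarrow> P v \<Longrightarrow> P (u + v)"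
  shows "P m"
proof -
  obtain g where g: "m = free_ext \<theta> g" using th_surj by (metis surjD)
  have s: "P (\<Sum>i\<in>S. f i)" if "\<And>i. P (f i)" for S and f :: "'a \<times> 'n \<Rightarrow> 'm"
  proof (induction S rule: infinite_finite_induct)
    case (insert x F) then show ?case using that p by simp
  qed (simp_all add: z)
  show ?thesis unfolding g free_ext_def
    by (rule s) (simp add: zsmult_th t)
qed

definition ext :: "('a \<Rightarrow> 'n \<Rightarrow> 'r::ab_group_add) \<Rightarrow> 'm \<Rightarrow> 'r" where
  "ext \<phi> m = free_ext \<phi> (SOME g. free_ext \<theta> g = m)"

definition goodphi :: "('a \<Rightarrow> 'n \<Rightarrow> 'r::ab_group_add) \<Rightarrow> bool" where
  "goodphi \<phi> \<longleftrightarrow> (\<forall>x y n. \<phi> (x + y) n = \<phi> x n + \<phi> y n) \<and>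
     (\<forall>x n n'. \<phi> x (n + n') = \<phi> x n + \<phi> x n') \<and>
     (\<forall>b x n. b \<in> B \<longrightarrow> \<phi> (x * b) n = \<phi> x (laN b n))"

lemma ext_eq:
  assumes "goodphi \<phi>" "free_ext \<theta> g = m"
  shows "ext \<phi> m = free_ext \<phi> g"
proof -
  let ?g = "SOME g. free_ext \<theta> g = m"
  have "free_ext \<theta> ?g = m" using assms(2) by (rule someI)
  then have "free_ext \<theta> (g - ?g) = 0" using assms(2) by (simp add: free_ext_diff)
  then have "g - ?g \<in> tensor_rel B laN" using th_ker by blast
  then have "free_ext \<phi> (g - ?g) = 0"
    by (rule free_ext_rel[rotated 3]) (use assms(1) in \<open>auto simp: goodphi_def\<close>)
  then show ?thesis unfolding ext_def by (simp add: free_ext_diff)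
qed

lemma ext_th: "goodphi \<phi> \<Longrightarrow> ext \<phi> (\<theta> x n) = \<phi> x n"
  using ext_eq[of \<phi> "Poly_Mapping.single (x, n) 1" "\<theta> x n"] by simp

lemma ext_add: "goodphi \<phi> \<Longrightarrow> ext \<phi> (u + v) = ext \<phi> u + ext \<phi> v"
proof -
  assume a: "goodphi \<phi>"
  obtain g h where g: "u = free_ext \<theta> g" and h: "v = free_ext \<theta> h" using th_surj by (metis surjD)
  have "ext \<phi> (u + v) = free_ext \<phi> (g + h)" by (rule ext_eq[OF a]) (simp add: g h free_ext_add)
  then show ?thesis using ext_eq[OF a g[symmetric]] ext_eq[OF a h[symmetric]] by (simp add: free_ext_add)
qed

definition blin :: "('n \<Rightarrow> 'a) \<Rightarrow> bool" where
  "blin f \<longleftrightarrow> (\<forall>x y. f (x + y) = f x + f y) \<and> (\<forall>b\<in>B. \<forall>n. f (laN b n) = b * f n) \<and> (\<forall>n. f n \<in> B)"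

definition alin :: "('m \<Rightarrow> 'a) \<Rightarrow> bool" where
  "alin F \<longleftrightarrow> (\<forall>m m'. F (m + m') = F m + F m') \<and> (\<forall>a m. F (laM a m) = a * F m)"

definition Fx :: "('n \<Rightarrow> 'a) \<Rightarrow> 'm \<Rightarrow> 'a" where
  "Fx f = ext (\<lambda>x n. x * f n)"

lemma good_Fx: "blin f \<Longrightarrow> goodphi (\<lambda>x n. x * f n)"
  unfolding goodphi_def blin_def by (simp add: distrib_right distrib_left mult.assoc)

lemma Fx_th [simp]: "blin f \<Longrightarrow> Fx f (\<theta> x n) = x * f n"
  unfolding Fx_def by (simp add: ext_th good_Fx)

lemma Fx_add: "blin f \<Longrightarrow> Fx f (u + v) = Fx f u + Fx f v"
  unfolding Fx_def by (simp add: ext_add good_Fx)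

lemma Fx_alin: "blin f \<Longrightarrow> alin (Fx f)"
proof -
  assume f: "blin f"
  have "Fx f (laM a m) = a * Fx f m" for a m
  proof (induction m rule: th_induct)
    case 1 then show ?case using additive_zero[of "Fx f"] Fx_add[OF f] by simp
  next
    case (2 x n) then show ?case using f by (simp add: th_l[symmetric] mult.assoc)
  next
    case (3 u v) then show ?case using f by (simp add: Fx_add distrib_left)
  qed
  then show ?thesis unfolding alin_def using Fx_add[OF f] by simp
qed

lemma alin_add: "alin F \<Longrightarrow> F (u + v) = F u + F v" by (simp add: alin_def)
lemma alin_laM: "alin F \<Longrightarrow> F (laM a u) = a * F u" by (simp add: alin_def)
lemma alin_sum: "alin F \<Longrightarrow> F (\<Sum>i\<in>S. f i) = (\<Sum>i\<in>S. F (f i))"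
  by (rule additive_sum) (simp add: alin_def)
lemma alin_zero: "alin F \<Longrightarrow> F 0 = 0"
  by (rule additive_zero) (simp add: alin_def)

end

context MS begin

lemma rho_lin: "left_linear UNIV laM laM (\<lambda>m. raM m y)"
  unfolding left_linear_def by (simp add: raM_laM)

lemma raM_inj: "(\<And>m. raM m y = raM m z) \<Longrightarrow> y = z"
proof -
  assume h: "\<And>m. raM m y = raM m z"
  have "\<exists>!s. s \<in> UNIV \<and> (\<forall>m. raM m y = raM m s)"
    using endM rho_lin unfolding endr_eq_def by blast
  then show "y = z" using h by blast
qed

definition iota :: "('m \<Rightarrow> 'm) \<Rightarrow> 'c" where
  "iota \<phi> = (THE y. \<forall>m. \<phi> m = raM m y)"

lemma raM_iota: "left_linear UNIV laM laM \<phi> \<Longrightarrow> raM m (iota \<phi>) = \<phi> m"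
proof -
  assume l: "left_linear UNIV laM laM \<phi>"
  have "\<exists>!s. s \<in> UNIV \<and> (\<forall>m. \<phi> m = raM m s)"
    using endM l unfolding endr_eq_def by blast
  then have "\<exists>!s. (\<forall>m. \<phi> m = raM m s)" by simp
  then have "\<forall>m. \<phi> m = raM m (iota \<phi>)" unfolding iota_def by (rule theI')
  then show ?thesis by simp
qed

definition E :: "('m \<Rightarrow> 'a) \<Rightarrow> 'a \<Rightarrow> 'n \<Rightarrow> 'c" where
  "E F a n = iota (\<lambda>m. \<theta> (F m * a) n)"

lemma raM_E: "alin F \<Longrightarrow> raM m (E F a n) = \<theta> (F m * a) n"
  unfolding E_def
  by (rule raM_iota) (simp add: left_linear_def alin_def distrib_right th_add1 mult.assoc th_l laM_mult)

lemma th1: "laM a (\<theta> 1 n) = \<theta> a n" using th_l[of a 1 n] by simp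

lemma E_in_B':
  assumes f: "blin f" and b: "b \<in> B"
  shows "E (Fx f) b n \<in> B'"
proof -
  let ?\<psi> = "\<lambda>n'. laN (f n' * b) n"
  have fB: "\<And>x. f x \<in> B" using f by (simp add: blin_def)
  have "left_linear B laN laN ?\<psi>"
    unfolding left_linear_def
  proof (intro conjI allI ballI)
    fix x y show "?\<psi> (x + y) = ?\<psi> x + ?\<psi> y"
      using f fB b by (simp add: blin_def distrib_right laN_add1 Bmult)
  next
    fix r x assume r: "r \<in> B"
    show "?\<psi> (laN r x) = laN r (?\<psi> x)"
      using f fB b r by (simp add: blin_def mult.assoc laN_mult Bmult)
  qed
  then obtain b' where b': "b' \<in> B'" "\<forall>n'. ?\<psi> n' = raN n' b'"
    using endN unfolding endr_eq_def by blast
  have "raM m b' = \<theta> (Fx f m * b) n" for m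
  proof (induction m rule: th_induct)
    case 1 then show ?case using alin_zero[OF Fx_alin[OF f]] th_laM[of 0 n] by simp
  next
    case (2 x n')
    have "raM (\<theta> x n') b' = \<theta> x (raN n' b')" using th_r[OF b'(1)] by simp
    also have "\<dots> = \<theta> x (laN (f n' * b) n)" using b' by simp
    also have "\<dots> = \<theta> (x * (f n' * b)) n" using th_bal fB b Bmult by simp
    finally show ?case using f by (simp add: mult.assoc)
  next
    case (3 u v) then show ?case using f by (simp add: Fx_add distrib_right th_add1)
  qed
  then have "b' = E (Fx f) b n"
    by (intro raM_inj) (simp add: raM_E Fx_alin f)
  then show ?thesis using b' by simp
qed

end

locale MS2 = MS B B' laM raM laN raN \<theta>
  for B :: "'a::ring_1 set" and B' :: "'c::ring_1 set"
    and laM :: "'a \<Rightarrow> 'm::ab_group_add \<Rightarrow> 'm" and raM :: "'m \<Rightarrow> 'c \<Rightarrow> 'm"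
    and laN :: "'a \<Rightarrow> 'n::ab_group_add \<Rightarrow> 'n" and raN :: "'n \<Rightarrow> 'c \<Rightarrow> 'n"
    and \<theta> :: "'a \<Rightarrow> 'n \<Rightarrow> 'm" +
  fixes k :: nat and fi :: "nat \<Rightarrow> 'n \<Rightarrow> 'a" and ni :: "nat \<Rightarrow> 'n"
    and K :: nat and hj :: "nat \<Rightarrow> 'n \<Rightarrow> 'a" and mj :: "nat \<Rightarrow> 'n"
    and D' :: "'c \<Rightarrow> 'c"
  assumes fi_blin: "\<And>i. blin (fi i)" and dualN: "\<And>n. n = (\<Sum>i<k. laN (fi i n) (ni i))"
    and hj_blin: "\<And>j. blin (hj j)" and gen: "(\<Sum>j<K. hj j (mj j)) = 1"
    and Dadd: "\<And>x y. D' (x + y) = D' x + D' y"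
    and Dmult: "\<And>x y. D' (x * y) = D' x * y + x * D' y"
    and DB': "\<And>b. b \<in> B' \<Longrightarrow> D' b = 0"
begin

abbreviation "F i \<equiv> Fx (fi i)"
abbreviation "G j \<equiv> Fx (hj j)"

lemma F_alin: "alin (F i)" by (rule Fx_alin[OF fi_blin])
lemma G_alin: "alin (G i)" by (rule Fx_alin[OF hj_blin])

lemma fiB: "fi i n \<in> B" using fi_blin by (simp add: blin_def)
lemma hjB: "hj i n \<in> B" using hj_blin by (simp add: blin_def)

lemma dualM: "m = (\<Sum>i<k. laM (F i m) (\<theta> 1 (ni i)))"
proof (induction m rule: th_induct)
  case 1 then show ?case by (simp add: alin_zero[OF F_alin])
next
  case (2 x n)
  have "(\<Sum>i<k. laM (F i (\<theta> x n)) (\<theta> 1 (ni i))) = (\<Sum>i<k. \<theta> (x * fi i n) (ni i))"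
    by (simp add: th1 fi_blin)
  also have "\<dots> = (\<Sum>i<k. \<theta> x (laN (fi i n) (ni i)))" by (simp add: th_bal fiB)
  also have "\<dots> = \<theta> x n" by (simp add: th_sum2[symmetric] dualN[symmetric])
  finally show ?case by simp
next
  case (3 u v)
  then show ?case by (simp add: alin_add[OF F_alin] sum.distrib)
qed

lemma D0: "D' 0 = 0" by (rule additive_zero) (rule Dadd)
lemma Dsum: "D' (\<Sum>i\<in>S. f i) = (\<Sum>i\<in>S. D' (f i))" by (rule additive_sum) (rule Dadd)
lemma Ddiff: "D' (x - y) = D' x - D' y" by (rule additive_diff) (rule Dadd)
lemma DB'mult: "p \<in> B' \<Longrightarrow> q \<in> B' \<Longrightarrow> D' (p * x * q) = p * D' x * q"
  by (simp add: Dmult DB')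

lemma gen_mid: "(\<Sum>p<K. c * hj p (mj p) * b) = c * b"
proof -
  have "(\<Sum>p<K. c * hj p (mj p) * b) = c * (\<Sum>p<K. hj p (mj p)) * b"
    by (simp add: sum_distrib_left sum_distrib_right)
  then show ?thesis by (simp add: gen)
qed

lemma Eprod: "E (G j) (a * b) (mj l) = (\<Sum>p<K. E (G j) a (mj p) * E (G p) b (mj l))"
proof (rule raM_inj)
  fix m
  have "raM m (\<Sum>p<K. E (G j) a (mj p) * E (G p) b (mj l))
      = (\<Sum>p<K. \<theta> (G j m * a * hj p (mj p) * b) (mj l))"
    by (simp add: raM_sum2 raM_mult raM_E G_alin hj_blin mult.assoc)
  also have "\<dots> = \<theta> (\<Sum>p<K. G j m * a * hj p (mj p) * b) (mj l)" by (simp add: th_sum1)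
  also have "\<dots> = \<theta> (G j m * a * b) (mj l)" by (simp only: gen_mid)
  finally show "raM m (E (G j) (a * b) (mj l)) = raM m (\<Sum>p<K. E (G j) a (mj p) * E (G p) b (mj l))"
    by (simp add: raM_E G_alin mult.assoc)
qed

end

context MS2 begin

definition w :: "nat \<Rightarrow> 'm" where "w j = \<theta> 1 (mj j)"
definition v :: "nat \<Rightarrow> 'm" where "v i = \<theta> 1 (ni i)"

lemma th_mj: "\<theta> c (mj j) = laM c (w j)" unfolding w_def by (rule th_laM)
lemma th_ni: "\<theta> c (ni j) = laM c (v j)" unfolding v_def by (rule th_laM)
lemma G_w [simp]: "G l (w j) = hj l (mj j)" unfolding w_def using hj_blin by simp

lemma dualMv: "m = (\<Sum>i<k. laM (F i m) (v i))"
  unfolding v_def by (rule dualM)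

lemma E_add: "alin H \<Longrightarrow> E H (a + a') n = E H a n + E H a' n"
  by (rule raM_inj) (simp add: raM_E distrib_left th_add1)

definition Dd :: "'a \<Rightarrow> 'a" where
  "Dd a = (\<Sum>j<K. \<Sum>l<K. G l (raM (w j) (D' (E (G j) a (mj l)))))"

lemma sum_gen_right: "(\<Sum>l<K. c * hj l (mj l)) = c"
  by (simp add: sum_distrib_left[symmetric] gen)

lemma sum_gen_left: "(\<Sum>l<K. hj l (mj l) * c) = c"
  by (simp add: sum_distrib_right[symmetric] gen)

lemma T1: "(\<Sum>j<K. \<Sum>l<K. \<Sum>p<K. G l (raM (raM (w j) (D' (E (G j) a (mj p)))) (E (G p) b (mj l))))
   = Dd a * b"
proof -
  have "(\<Sum>j<K. \<Sum>l<K. \<Sum>p<K. G l (raM (raM (w j) (D' (E (G j) a (mj p)))) (E (G p) b (mj l))))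
    = (\<Sum>j<K. \<Sum>l<K. \<Sum>p<K. (G p (raM (w j) (D' (E (G j) a (mj p)))) * b) * hj l (mj l))"
    by (simp add: raM_E G_alin hj_blin)
  also have "\<dots> = (\<Sum>j<K. \<Sum>p<K. \<Sum>l<K. (G p (raM (w j) (D' (E (G j) a (mj p)))) * b) * hj l (mj l))"
    by (rule sum.cong[OF refl], rule sum.swap)
  also have "\<dots> = (\<Sum>j<K. \<Sum>p<K. G p (raM (w j) (D' (E (G j) a (mj p)))) * b)"
    by (simp only: sum_gen_right)
  also have "\<dots> = Dd a * b" by (simp add: Dd_def sum_distrib_right)
  finally show ?thesis .
qed

lemma T2inner: "G l (raM (raM (w j) (E (G j) a (mj p))) y) = hj j (mj j) * a * G l (raM (w p) y)"
proof -
  have "raM (w j) (E (G j) a (mj p)) = laM (hj j (mj j) * a) (w p)"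
    by (simp add: raM_E G_alin th_mj)
  then show ?thesis by (simp add: raM_laM alin_laM[OF G_alin] mult.assoc)
qed

lemma T2: "(\<Sum>j<K. \<Sum>l<K. \<Sum>p<K. G l (raM (raM (w j) (E (G j) a (mj p))) (D' (E (G p) b (mj l)))))
   = a * Dd b"
proof -
  have "(\<Sum>j<K. \<Sum>l<K. \<Sum>p<K. G l (raM (raM (w j) (E (G j) a (mj p))) (D' (E (G p) b (mj l)))))
     = (\<Sum>j<K. \<Sum>l<K. \<Sum>p<K. hj j (mj j) * (a * G l (raM (w p) (D' (E (G p) b (mj l))))))"
    by (simp only: T2inner mult.assoc)
  also have "\<dots> = (\<Sum>j<K. \<Sum>p<K. \<Sum>l<K. hj j (mj j) * (a * G l (raM (w p) (D' (E (G p) b (mj l))))))"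
    by (rule sum.cong[OF refl], rule sum.swap)
  also have "\<dots> = (\<Sum>p<K. \<Sum>j<K. \<Sum>l<K. hj j (mj j) * (a * G l (raM (w p) (D' (E (G p) b (mj l))))))"
    by (rule sum.swap)
  also have "\<dots> = (\<Sum>p<K. \<Sum>l<K. \<Sum>j<K. hj j (mj j) * (a * G l (raM (w p) (D' (E (G p) b (mj l))))))"
    by (rule sum.cong[OF refl], rule sum.swap)
  also have "\<dots> = (\<Sum>p<K. \<Sum>l<K. a * G l (raM (w p) (D' (E (G p) b (mj l)))))"
    by (simp only: sum_gen_left)
  also have "\<dots> = a * Dd b" by (simp add: Dd_def sum_distrib_left)
  finally show ?thesis .
qed

lemma Dd_mult: "Dd (a * b) = Dd a * b + a * Dd b"
proof -
  have "Dd (a * b) = (\<Sum>j<K. \<Sum>l<K. \<Sum>p<K.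
      G l (raM (raM (w j) (D' (E (G j) a (mj p)))) (E (G p) b (mj l)))
    + G l (raM (raM (w j) (E (G j) a (mj p))) (D' (E (G p) b (mj l)))))"
    by (simp add: Dd_def Eprod Dsum Dmult raM_sum2 raM_mult alin_sum[OF G_alin] alin_add[OF G_alin])
  also have "\<dots> = Dd a * b + a * Dd b"
    by (simp only: sum.distrib T1 T2)
  finally show ?thesis .
qed

lemma Dd_add: "Dd (a + b) = Dd a + Dd b"
  by (simp add: Dd_def E_add G_alin Dadd alin_add[OF G_alin] sum.distrib)

lemma Dd_B: "b \<in> B \<Longrightarrow> Dd b = 0"
  by (simp add: Dd_def E_in_B' hj_blin DB' alin_zero[OF G_alin])

lemma Dd_der: "is_B_derivation B Dd"
  unfolding is_B_derivation_def using Dd_add Dd_mult Dd_B by blast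

lemma L3:
  assumes f: "blin f"
  shows "D' (E (Fx f) a n) = E (Fx f) (Dd a) n"
proof -
  have A: "E (Fx f) a n = (\<Sum>j<K. \<Sum>l<K. E (Fx f) 1 (mj j) * E (G j) a (mj l) * E (G l) 1 n)"
  proof (rule raM_inj)
    fix m
    have "raM m (\<Sum>j<K. \<Sum>l<K. E (Fx f) 1 (mj j) * E (G j) a (mj l) * E (G l) 1 n)
        = (\<Sum>j<K. \<Sum>l<K. \<theta> (Fx f m * hj j (mj j) * a * hj l (mj l)) n)"
      by (simp add: raM_sum2 raM_mult raM_E G_alin Fx_alin f hj_blin mult.assoc)
    also have "\<dots> = \<theta> (\<Sum>j<K. \<Sum>l<K. Fx f m * hj j (mj j) * a * hj l (mj l)) n"
      by (simp add: th_sum1)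
    also have "(\<Sum>j<K. \<Sum>l<K. Fx f m * hj j (mj j) * a * hj l (mj l)) = Fx f m * a"
      by (simp only: sum_gen_right gen_mid)
    finally show "raM m (E (Fx f) a n) = raM m (\<Sum>j<K. \<Sum>l<K. E (Fx f) 1 (mj j) * E (G j) a (mj l) * E (G l) 1 n)"
      by (simp add: raM_E Fx_alin f)
  qed
  have B: "D' (E (Fx f) a n) = (\<Sum>j<K. \<Sum>l<K. E (Fx f) 1 (mj j) * D' (E (G j) a (mj l)) * E (G l) 1 n)"
    by (subst A) (simp add: Dsum DB'mult E_in_B' f hj_blin B1)
  show ?thesis
  proof (rule raM_inj)
    fix m
    have "raM m (D' (E (Fx f) a n))
        = (\<Sum>j<K. \<Sum>l<K. \<theta> (Fx f m * G l (raM (w j) (D' (E (G j) a (mj l))))) n)"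
      by (simp add: B raM_sum2 raM_mult raM_E G_alin Fx_alin f th_mj raM_laM alin_laM[OF G_alin] th_l[symmetric])
    also have "\<dots> = \<theta> (Fx f m * Dd a) n"
      by (simp add: th_sum1 Dd_def sum_distrib_left)
    finally show "raM m (D' (E (Fx f) a n)) = raM m (E (Fx f) (Dd a) n)"
      by (simp add: raM_E Fx_alin f)
  qed
qed

lemma decomp: "x = (\<Sum>i<k. \<Sum>q<k. E (F i) (F q (raM (v i) x)) (ni q))"
proof (rule raM_inj)
  fix m
  have "raM m (\<Sum>i<k. \<Sum>q<k. E (F i) (F q (raM (v i) x)) (ni q))
     = (\<Sum>i<k. laM (F i m) (\<Sum>q<k. laM (F q (raM (v i) x)) (v q)))"
    by (simp add: raM_sum2 raM_E F_alin th_ni laM_mult laM_sum2)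
  also have "\<dots> = (\<Sum>i<k. laM (F i m) (raM (v i) x))"
    by (simp only: dualMv[symmetric])
  also have "\<dots> = raM m x"
    by (subst (2) dualMv) (simp add: raM_sum1 raM_laM)
  finally show "raM m x = raM m (\<Sum>i<k. \<Sum>q<k. E (F i) (F q (raM (v i) x)) (ni q))" by simp
qed

lemma final:
  assumes s: "\<And>x. Dd x = s * x - x * s"
  shows "D' x = (\<Sum>q<k. E (F q) s (ni q)) * x - x * (\<Sum>q<k. E (F q) s (ni q))"
proof (rule raM_inj)
  fix m
  let ?a = "\<lambda>i q. F q (raM (v i) x)"
  have Fsum: "(\<Sum>i<k. F i m * ?a i q) = F q (raM m x)" for q
  proof -
    have "(\<Sum>i<k. F i m * ?a i q) = F q (\<Sum>i<k. laM (F i m) (raM (v i) x))"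
      by (simp add: alin_sum[OF F_alin] alin_laM[OF F_alin])
    also have "(\<Sum>i<k. laM (F i m) (raM (v i) x)) = raM m x"
      by (subst (2) dualMv) (simp add: raM_sum1 raM_laM)
    finally show ?thesis .
  qed
  have "D' x = (\<Sum>i<k. \<Sum>q<k. E (F i) (s * ?a i q - ?a i q * s) (ni q))"
    by (subst decomp) (simp add: Dsum L3 fi_blin s)
  then have "raM m (D' x) = (\<Sum>i<k. \<Sum>q<k. \<theta> (F i m * s * ?a i q) (ni q))
       - (\<Sum>i<k. \<Sum>q<k. \<theta> (F i m * ?a i q * s) (ni q))"
    by (simp add: raM_sum2 raM_E F_alin right_diff_distrib th_diff1 sum_subtractf mult.assoc)
  also have "(\<Sum>i<k. \<Sum>q<k. \<theta> (F i m * s * ?a i q) (ni q)) = (\<Sum>i<k. laM (F i m * s) (raM (v i) x))"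
  proof -
    have "(\<Sum>i<k. \<Sum>q<k. \<theta> (F i m * s * ?a i q) (ni q)) = (\<Sum>i<k. laM (F i m * s) (\<Sum>q<k. laM (?a i q) (v q)))"
      by (simp add: th_ni laM_mult laM_sum2)
    then show ?thesis by (simp only: dualMv[symmetric])
  qed
  also have "(\<Sum>i<k. \<Sum>q<k. \<theta> (F i m * ?a i q * s) (ni q)) = (\<Sum>q<k. \<theta> (F q (raM m x) * s) (ni q))"
  proof -
    have "(\<Sum>i<k. \<Sum>q<k. \<theta> (F i m * ?a i q * s) (ni q)) = (\<Sum>q<k. \<Sum>i<k. \<theta> (F i m * ?a i q * s) (ni q))"
      by (rule sum.swap)
    also have "\<dots> = (\<Sum>q<k. \<theta> ((\<Sum>i<k. F i m * ?a i q) * s) (ni q))"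
      by (simp add: th_sum1 sum_distrib_right)
    finally show ?thesis by (simp only: Fsum)
  qed
  finally have "raM m (D' x) = (\<Sum>i<k. laM (F i m * s) (raM (v i) x)) - (\<Sum>q<k. \<theta> (F q (raM m x) * s) (ni q))" .
  moreover have "raM m ((\<Sum>q<k. E (F q) s (ni q)) * x) = (\<Sum>i<k. laM (F i m * s) (raM (v i) x))"
    by (simp add: raM_mult raM_sum2 raM_sum1 raM_E F_alin th_ni raM_laM)
  moreover have "raM m (x * (\<Sum>q<k. E (F q) s (ni q))) = (\<Sum>q<k. \<theta> (F q (raM m x) * s) (ni q))"
    by (simp add: raM_mult raM_sum2 raM_E F_alin)
  ultimately show "raM m (D' x) = raM m ((\<Sum>q<k. E (F q) s (ni q)) * x - x * (\<Sum>q<k. E (F q) s (ni q)))"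
    by (simp add: raM_diff2)
qed

end

lemma dsum_gsum:
  assumes z: "(0::'y::ab_group_add) \<in> CY" and cl: "\<forall>x\<in>CY. \<forall>y\<in>CY. x + y \<in> CY"
    and ga: "\<forall>v\<in>dsum_carrier CY n. \<forall>w\<in>dsum_carrier CY n. g (\<lambda>i. v i + w i) = g v + (g w :: 'z::ab_group_add)"
    and fin: "finite S"
  shows "(\<forall>i\<in>S. u i \<in> dsum_carrier CY n) \<longrightarrow>
     (\<lambda>j. \<Sum>i\<in>S. u i j) \<in> dsum_carrier CY n \<and> g (\<lambda>j. \<Sum>i\<in>S. u i j) = (\<Sum>i\<in>S. g (u i))"
  using fin
proof (induction S rule: finite_induct)
  case empty
  have c0: "(\<lambda>j. 0::'y) \<in> dsum_carrier CY n" using z by (simp add: dsum_carrier_def)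
  have "g (\<lambda>j. 0::'y) = g (\<lambda>j. 0) + g (\<lambda>j. 0)" using ga[rule_format, OF c0 c0] by simp
  then have "g (\<lambda>j. 0::'y) = 0" by simp
  then show ?case using c0 by simp
next
  case (insert x F)
  show ?case
  proof
    assume a: "\<forall>i\<in>insert x F. u i \<in> dsum_carrier CY n"
    then have ih: "(\<lambda>j. \<Sum>i\<in>F. u i j) \<in> dsum_carrier CY n" "g (\<lambda>j. \<Sum>i\<in>F. u i j) = (\<Sum>i\<in>F. g (u i))"
      using insert.IH a by auto
    have ux: "u x \<in> dsum_carrier CY n" using a by simp
    have "(\<lambda>j. u x j + (\<Sum>i\<in>F. u i j)) \<in> dsum_carrier CY n"
      using ux ih(1) cl by (auto simp: dsum_carrier_def)
    moreover have "g (\<lambda>j. u x j + (\<Sum>i\<in>F. u i j)) = g (u x) + (\<Sum>i\<in>F. g (u i))"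
      using ga[rule_format, OF ux ih(1)] ih(2) by simp
    ultimately show "(\<lambda>j. \<Sum>i\<in>insert x F. u i j) \<in> dsum_carrier CY n \<and>
        g (\<lambda>j. \<Sum>i\<in>insert x F. u i j) = (\<Sum>i\<in>insert x F. g (u i))"
      using insert by simp
  qed
qed

context MS begin

lemma dual_exists:
  assumes "left_mod_dvd B UNIV laN B (*)"
  shows "\<exists>(k::nat) fi ni. (\<forall>i. blin (fi i)) \<and> (\<forall>n. n = (\<Sum>i<k. laN (fi i n) (ni i)))"
proof -
  obtain n0 and f :: "'n \<Rightarrow> nat \<Rightarrow> 'a" and g where
    all: "(\<forall>x\<in>UNIV. f x \<in> dsum_carrier B n0) \<and>
        (\<forall>v\<in>dsum_carrier B n0. g v \<in> UNIV) \<and>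
        (\<forall>x\<in>UNIV. \<forall>y\<in>UNIV. f (x + y) = (\<lambda>i. f x i + f y i)) \<and>
        (\<forall>r\<in>B. \<forall>x\<in>UNIV. f (laN r x) = dsum_act (*) r (f x)) \<and>
        (\<forall>v\<in>dsum_carrier B n0. \<forall>w\<in>dsum_carrier B n0. g (\<lambda>i. v i + w i) = g v + g w) \<and>
        (\<forall>r\<in>B. \<forall>v\<in>dsum_carrier B n0. g (dsum_act (*) r v) = laN r (g v)) \<and>
        (\<forall>x\<in>UNIV. g (f x) = x)"
    using assms unfolding left_mod_dvd_def by (elim exE) (rule that)
  have f1: "\<forall>x. f x \<in> dsum_carrier B n0" using all by simp
  have f2: "\<forall>x y. f (x + y) = (\<lambda>i. f x i + f y i)" using all by simp
  have f3: "\<forall>r\<in>B. \<forall>x. f (laN r x) = dsum_act (*) r (f x)" using all by simp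
  have g2: "\<forall>v\<in>dsum_carrier B n0. \<forall>w\<in>dsum_carrier B n0. g (\<lambda>i. v i + w i) = g v + g w"
    using all by (elim conjE)
  have g3: "\<forall>r\<in>B. \<forall>v\<in>dsum_carrier B n0. g (dsum_act (*) r v) = laN r (g v)" using all by (elim conjE)
  have gf: "\<forall>x. g (f x) = x" using all by simp
  define fi where "fi i x = f x i" for i x
  define \<delta> where "\<delta> i = (\<lambda>j::nat. if j = i then (1::'a) else 0)" for i
  define ni where "ni i = g (\<delta> i)" for i
  have bl: "blin (fi i)" for i
    unfolding blin_def fi_def using f1 f2 f3 by (auto simp: dsum_carrier_def dsum_act_def)
  have dc: "\<delta> i \<in> dsum_carrier B n0" if "i < n0" for i
    using that B0 B1 by (auto simp: dsum_carrier_def \<delta>_def)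
  have "n = (\<Sum>i<n0. laN (fi i n) (ni i))" for n
  proof -
    let ?u = "\<lambda>i. dsum_act (*) (fi i n) (\<delta> i)"
    have uc: "\<forall>i\<in>{..<n0}. ?u i \<in> dsum_carrier B n0"
      using dc f1 Bmult by (auto simp: dsum_carrier_def dsum_act_def fi_def)
    have cl: "\<forall>x\<in>B. \<forall>y\<in>B. x + y \<in> B" using Badd by blast
    have e: "(\<lambda>j. \<Sum>i<n0. ?u i j) = f n"
    proof
      fix j
      have "(\<Sum>i<n0. ?u i j) = (\<Sum>i<n0. if i = j then f n j else 0)"
        by (rule sum.cong) (auto simp: dsum_act_def \<delta>_def fi_def)
      also have "\<dots> = (if j < n0 then f n j else 0)" by simp
      also have "\<dots> = f n j" using f1 by (auto simp: dsum_carrier_def)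
      finally show "(\<Sum>i<n0. ?u i j) = f n j" .
    qed
    have "g (\<lambda>j. \<Sum>i<n0. ?u i j) = (\<Sum>i<n0. g (?u i))"
      using dsum_gsum[OF B0 cl g2, of "{..<n0}" ?u] uc by simp
    also have "\<dots> = (\<Sum>i<n0. laN (fi i n) (ni i))"
      using g3 dc f1 by (intro sum.cong refl) (auto simp: ni_def fi_def dsum_carrier_def)
    finally show ?thesis using e gf by simp
  qed
  note eq = this
  show ?thesis by (rule exI[where x=n0], rule exI[where x=fi], rule exI[where x=ni]) (use bl eq in simp)
qed

lemma gen_exists:
  assumes "left_mod_dvd B B (*) UNIV laN"
  shows "\<exists>(K::nat) hj mj. (\<forall>j. blin (hj j)) \<and> (\<Sum>j<K. hj j (mj j)) = 1"
proof -
  obtain n2 and f :: "'a \<Rightarrow> nat \<Rightarrow> 'n" and g where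
    all: "(\<forall>x\<in>B. f x \<in> dsum_carrier UNIV n2) \<and>
        (\<forall>v\<in>dsum_carrier UNIV n2. g v \<in> B) \<and>
        (\<forall>x\<in>B. \<forall>y\<in>B. f (x + y) = (\<lambda>i. f x i + f y i)) \<and>
        (\<forall>r\<in>B. \<forall>x\<in>B. f (r * x) = dsum_act laN r (f x)) \<and>
        (\<forall>v\<in>dsum_carrier UNIV n2. \<forall>w\<in>dsum_carrier UNIV n2. g (\<lambda>i. v i + w i) = g v + g w) \<and>
        (\<forall>r\<in>B. \<forall>v\<in>dsum_carrier UNIV n2. g (dsum_act laN r v) = r * g v) \<and>
        (\<forall>x\<in>B. g (f x) = x)"
    using assms unfolding left_mod_dvd_def by (elim exE) (rule that)
  have f1: "\<forall>x\<in>B. f x \<in> dsum_carrier UNIV n2" using all by (elim conjE)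
  have g1: "\<forall>v\<in>dsum_carrier UNIV n2. g v \<in> B" using all by (elim conjE)
  have g2: "\<forall>v\<in>dsum_carrier UNIV n2. \<forall>w\<in>dsum_carrier UNIV n2. g (\<lambda>i. v i + w i) = g v + g w"
    using all by (elim conjE)
  have g3: "\<forall>r\<in>B. \<forall>v\<in>dsum_carrier UNIV n2. g (dsum_act laN r v) = r * g v" using all by (elim conjE)
  have gf: "\<forall>x\<in>B. g (f x) = x" using all by (elim conjE)
  define e :: "nat \<Rightarrow> 'n \<Rightarrow> nat \<Rightarrow> 'n" where "e j n = (\<lambda>i::nat. if i = j then n else (0::'n))" for j n
  define hj where "hj j n = (if j < n2 then g (e j n) else 0)" for j n
  define mj where "mj j = f 1 j" for j
  have ec: "e j n \<in> dsum_carrier UNIV n2" if "j < n2" for j n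
    using that by (auto simp: dsum_carrier_def e_def)
  have bl: "blin (hj j)" for j
    unfolding blin_def
  proof (intro conjI allI ballI)
    fix x y show "hj j (x + y) = hj j x + hj j y"
    proof (cases "j < n2")
      case True
      have "e j (x + y) = (\<lambda>i. e j x i + e j y i)" by (auto simp: e_def)
      then show ?thesis using True g2[rule_format, OF ec ec] by (simp add: hj_def)
    qed (simp add: hj_def)
  next
    fix b n assume b: "b \<in> B"
    show "hj j (laN b n) = b * hj j n"
    proof (cases "j < n2")
      case True
      have "e j (laN b n) = dsum_act laN b (e j n)"
        using b laN_zero2 by (auto simp: e_def dsum_act_def)
      then show ?thesis using True g3[rule_format, OF b ec] by (simp add: hj_def)
    qed (simp add: hj_def)
  next
    fix n show "hj j n \<in> B" using g1 ec[of j n] B0 by (simp add: hj_def)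
  qed
  have "(\<Sum>j<n2. hj j (mj j)) = 1"
  proof -
    have cl: "\<forall>x\<in>(UNIV::'n set). \<forall>y\<in>UNIV. x + y \<in> UNIV" by simp
    have uc: "\<forall>j\<in>{..<n2}. e j (mj j) \<in> dsum_carrier UNIV n2" using ec by simp
    have ee: "(\<lambda>i. \<Sum>j<n2. e j (mj j) i) = f 1"
    proof
      fix i
      have "(\<Sum>j<n2. e j (mj j) i) = (if i < n2 then f 1 i else 0)"
        by (simp add: e_def mj_def)
      also have "\<dots> = f 1 i" using f1 B1 by (auto simp: dsum_carrier_def)
      finally show "(\<Sum>j<n2. e j (mj j) i) = f 1 i" .
    qed
    have "(\<Sum>j<n2. hj j (mj j)) = (\<Sum>j<n2. g (e j (mj j)))" by (simp add: hj_def)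
    also have "\<dots> = g (\<lambda>i. \<Sum>j<n2. e j (mj j) i)"
      using dsum_gsum[of UNIV, OF _ cl g2, of "{..<n2}" "\<lambda>j. e j (mj j)"] uc by simp
    also have "\<dots> = 1" using ee gf B1 by simp
    finally show ?thesis .
  qed
  note eq = this
  show ?thesis by (rule exI[where x=n2], rule exI[where x=hj], rule exI[where x=mj]) (use bl eq in simp)
qed

end

theorem theorem3p5:
  fixes B :: "'a::ring_1 set" and B' :: "'c::ring_1 set"
    and laM :: "'a \<Rightarrow> 'm::ab_group_add \<Rightarrow> 'm" and raM :: "'m \<Rightarrow> 'c \<Rightarrow> 'm"
    and laN :: "'a \<Rightarrow> 'n::ab_group_add \<Rightarrow> 'n" and raN :: "'n \<Rightarrow> 'c \<Rightarrow> 'n"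
  assumes "is_subring B" and "is_subring B'"
    and "weakly_separable B"
    and "morita_equiv_via B B' laM raM laN raN"
  shows "weakly_separable B'"
proof -
  have mM: "morita_module (UNIV :: 'a set) (UNIV :: 'c set) laM raM"
    and mN: "morita_module B B' laN raN" and ti: "tensor_iso B B' laN raN laM raM"
    using assms(4) unfolding morita_equiv_via_def by auto
  obtain \<theta> :: "'a \<Rightarrow> 'n \<Rightarrow> 'm" where
    t1: "surj (free_ext \<theta>)" and t2: "{f. free_ext \<theta> f = 0} = tensor_rel B laN"
    and t3: "\<forall>a x n. \<theta> (a * x) n = laM a (\<theta> x n)"
    and t4: "\<forall>b'\<in>B'. \<forall>x n. \<theta> x (raN n b') = raM (\<theta> x n) b'"
    using ti unfolding tensor_iso_def by blast
  interpret MS B B' laM raM laN raN \<theta>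
    using assms(1,2) mM mN t1 t2 t3 t4 unfolding morita_module_def by unfold_locales auto
  have sim: "left_mod_sim B UNIV laN B (*)" using mN unfolding morita_module_def by simp
  obtain k :: nat and fi ni where d1: "\<forall>i. blin (fi i)" and d2: "\<forall>n. n = (\<Sum>i<k. laN (fi i n) (ni i))"
    using dual_exists sim unfolding left_mod_sim_def by blast
  obtain K :: nat and hj mj where h1: "\<forall>j. blin (hj j)" and h2: "(\<Sum>j<K. hj j (mj j)) = 1"
    using gen_exists sim unfolding left_mod_sim_def by blast
  show ?thesis
    unfolding weakly_separable_def
  proof (intro allI impI)
    fix D assume D: "is_B_derivation B' D"
    interpret MS2 B B' laM raM laN raN \<theta> k fi ni K hj mj D
      using d1 d2 h1 h2 D unfolding is_B_derivation_def by unfold_locales auto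
    obtain s where s: "\<forall>x. Dd x = s * x - x * s"
      using assms(3) Dd_der unfolding weakly_separable_def is_inner_derivation_def by blast
    show "is_inner_derivation D"
      unfolding is_inner_derivation_def using final s by blast
  qed
qed


end
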